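(* Let $q>0$, $\mu>0$, and let $\varphi_n^{(0)}\in(-\pi/2,\pi/2)$ be a real solution of $q\sin\varphi_n^{(0)}=n\pi-\varphi_n^{(0)}$ for some integer $n$. Then there is a unique analytic function $\lambda\mapsto\varphi_n(\lambda)$, defined for $\lambda$ in a neighborhood of $0$, with $\varphi_n(0)=\varphi_n^{(0)}$ and $F(\lambda,\varphi_n(\lambda))=0$, and with $q_n:=2q+2/\cos\varphi_n^{(0)}$ it satisfies $$\varphi_n(\lambda)=\varphi_n^{(0)}-\frac{\tan\varphi_n^{(0)}}{q_n}\lambda+\tan\varphi_n^{(0)}\Bigl(\frac{1}{q_n^2}+\frac{q}{q_n^3}\tan^2\varphi_n^{(0)}+\frac{i}{2}\frac{\sin\varphi_n^{(0)}}{q_n}\Bigr)\lambda^2+O(\lambda^3).$$ Consequently $s_n(\lambda):=i\mu\sin\varphi_n(\lambda)$ satisfies, with $\omega_n^{(0)}:=\mu\sin\varphi_n^{(0)}$ and $\sigma_n:=1-q_n^{-1}\sin^2\varphi_n^{(0)}/\cos^3\varphi_n^{(0)}$, $$s_n(\lambda)=i\omega_n^{(0)}\Bigl[1-\frac{\lambda}{q_n}+\frac{\sigma_n}{q_n^2}\lambda^2+\frac{i}{2}\frac{\sin\varphi_n^{(0)}}{q_n}\lambda^2+O(\lambda^3)\Bigr];$$ in particular $\mathrm{Re}\,s_n(\lambda)=-\frac{\mu\sin^2\varphi_n^{(0)}}{2q_n}\lambda^2+O(\lambda^3)$.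
   Context: $Q=\{\varphi\in\mathbb{C}:-\pi/2<\mathrm{Re}\,\varphi<\pi/2\}$ and $F(\lambda,\varphi):=1+i\lambda\sin\varphi-e^{-2i\varphi-2qi\sin\varphi}$ for $\lambda\ge 0$ (here $\lambda=2\mu/A$ and $q=a\mu$ for the toy potential $A\delta(x)+\mu^2\theta(x-a)$). *)

theory Defs
  imports "HOL-Analysis.Analysis" "HOL-Library.Landau_Symbols"
begin

definition stripQ :: "complex set" where
  "stripQ = {z. - (pi/2) < Re z \<and> Re z < pi/2}"

definition F :: "real \<Rightarrow> complex \<Rightarrow> complex \<Rightarrow> complex" where
  "F q l z = 1 + \<i> * l * sin z - exp (- 2 * \<i> * z - 2 * of_real q * \<i> * sin z)"

end

theory Submission
  imports Defs "HOL-Complex_Analysis.Complex_Analysis"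
begin

lemma pole_fact:
  fixes f :: "complex \<Rightarrow> complex"
  assumes "f holomorphic_on ball 0 r" "r > 0"
  defines "g \<equiv> (\<lambda>z. if z = 0 then deriv f 0 else (f z - f 0) / z)"
  shows "g holomorphic_on ball 0 r" "\<And>z. f z = f 0 + z * g z" "g 0 = deriv f 0"
proof -
  show "g holomorphic_on ball 0 r" unfolding g_def
    using pole_lemma_open[OF assms(1) open_ball, of 0] unfolding diff_zero .
  show "\<And>z. f z = f 0 + z * g z" by (simp add: g_def)
  show "g 0 = deriv f 0" by (simp add: g_def)
qed

lemma taylor2_bigo:
  fixes f :: "complex \<Rightarrow> complex"
  assumes hol: "f holomorphic_on ball 0 r" and r: "r > 0"
  shows "(\<lambda>l. f l - (f 0 + deriv f 0 * l + deriv (deriv f) 0 / 2 * l^2)) \<in> O[at 0](\<lambda>l. l^3)"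
proof -
  obtain f1 where h1: "f1 holomorphic_on ball 0 r" "\<And>z. f z = f 0 + z * f1 z" "f1 0 = deriv f 0"
    using pole_fact[OF hol r] by blast
  obtain f2 where h2: "f2 holomorphic_on ball 0 r" "\<And>z. f1 z = f1 0 + z * f2 z" "f2 0 = deriv f1 0"
    using pole_fact[OF h1(1) r] by blast
  obtain f3 where h3: "f3 holomorphic_on ball 0 r" "\<And>z. f2 z = f2 0 + z * f3 z" "f3 0 = deriv f2 0"
    using pole_fact[OF h2(1) r] by blast
  have d1: "(f1 has_field_derivative deriv f1 z) (at z)" if "z \<in> ball 0 r" for z
    using h1(1) that by (meson DERIV_deriv_iff_field_differentiable holomorphic_on_imp_differentiable_at open_ball)
  have hd1: "deriv f1 holomorphic_on ball 0 r" using h1(1) by (simp add: holomorphic_deriv)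
  have dd1: "(deriv f1 has_field_derivative deriv (deriv f1) z) (at z)" if "z \<in> ball 0 r" for z
    using hd1 that by (meson DERIV_deriv_iff_field_differentiable holomorphic_on_imp_differentiable_at open_ball)
  have df: "(f has_field_derivative (f1 z + z * deriv f1 z)) (at z)" if "z \<in> ball 0 r" for z
  proof -
    have "((\<lambda>z. f 0 + z * f1 z) has_field_derivative (f1 z + z * deriv f1 z)) (at z)"
      by (rule derivative_eq_intros d1[OF that] refl | simp)+
    then show ?thesis using h1(2) by (metis (no_types) ext)
  qed
  have eqd: "deriv f z = f1 z + z * deriv f1 z" if "z \<in> ball 0 r" for z
    using df[OF that] by (rule DERIV_imp_deriv)
  have "((\<lambda>z. f1 z + z * deriv f1 z) has_field_derivative (deriv f1 0 + (deriv f1 0 + 0 * deriv (deriv f1) 0))) (at 0)"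
    by (rule derivative_eq_intros d1 dd1 refl | simp add: r)+
  then have "((\<lambda>z. f1 z + z * deriv f1 z) has_field_derivative 2 * deriv f1 0) (at 0)"
    by simp
  then have "(deriv f has_field_derivative 2 * deriv f1 0) (at 0)"
    by (rule has_field_derivative_transform_within_open[where S="ball 0 r"]) (use r eqd in auto)
  then have dd: "deriv (deriv f) 0 = 2 * deriv f1 0" by (rule DERIV_imp_deriv)
  have eq: "f l - (f 0 + deriv f 0 * l + deriv (deriv f) 0 / 2 * l^2) = f3 l * l^3" for l
    using h1(2)[of l] h2(2)[of l] h3(2)[of l] h1(3) h2(3) dd
    by (simp add: algebra_simps power3_eq_cube power2_eq_square)
  have "isCont f3 0"
    using h3(1) r by (meson centre_in_ball open_ball holomorphic_on_imp_continuous_on continuous_on_eq_continuous_at)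
  then have "\<forall>\<^sub>F l in at 0. norm (f3 l) \<le> norm (f3 0) + 1"
  proof -
    have "(f3 \<longlongrightarrow> f3 0) (at 0)" using \<open>isCont f3 0\<close> by (simp add: isCont_def)
    then have "((\<lambda>l. norm (f3 l)) \<longlongrightarrow> norm (f3 0)) (at 0)" by (rule tendsto_norm)
    then have "\<forall>\<^sub>F l in at 0. norm (f3 l) < norm (f3 0) + 1" by (rule order_tendstoD) simp
    then show ?thesis by eventually_elim simp
  qed
  then have "\<forall>\<^sub>F l in at 0. norm (f3 l * l^3) \<le> (norm (f3 0) + 1) * norm (l^3)"
    by eventually_elim (simp add: norm_mult mult_right_mono)
  then show ?thesis unfolding eq by (rule bigoI)
qed

definition GG :: "real \<Rightarrow> complex \<Rightarrow> complex" where
  "GG q z = exp (- 2 * \<i> * z - 2 * of_real q * \<i> * sin z)"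

lemma F_GG: "F q l z = 1 + \<i> * l * sin z - GG q z"
  by (simp add: F_def GG_def)

lemma GG_deriv: "(GG q has_field_derivative GG q z * (- 2 * \<i> - 2 * of_real q * \<i> * cos z)) (at z)"
  unfolding GG_def by (rule derivative_eq_intros refl | simp)+

lemma GG_phi0:
  fixes q \<phi>0 :: real and n :: int
  assumes hsol: "q * sin \<phi>0 = of_int n * pi - \<phi>0"
  shows "GG q (of_real \<phi>0) = 1"
proof -
  have e: "- 2 * \<i> * of_real \<phi>0 - 2 * of_real q * \<i> * sin (of_real \<phi>0) = (2 * of_int (-n) * pi) * \<i>"
  proof -
    have "\<phi>0 + q * sin \<phi>0 = of_int n * pi" using hsol by simp
    then have "complex_of_real (\<phi>0 + q * sin \<phi>0) = of_real (of_int n * pi)" by simp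
    then have "of_real \<phi>0 + of_real q * of_real (sin \<phi>0) = (of_int n * of_real pi :: complex)" by simp
    then have "- 2 * \<i> * (of_real \<phi>0 + of_real q * of_real (sin \<phi>0)) = - 2 * \<i> * (of_int n * of_real pi :: complex)" by simp
    then show ?thesis by (simp add: sin_of_real algebra_simps)
  qed
  show ?thesis unfolding GG_def e by (rule exp_integer_2pi) simp
qed

lemma open_stripQ: "open stripQ"
proof -
  have "stripQ = {z. Re z > - (pi/2)} \<inter> {z. Re z < pi/2}" by (auto simp: stripQ_def)
  moreover have "open ({z. Re z > - (pi/2)} \<inter> {z. Re z < pi/2})"
    by (intro open_Int open_halfspace_Re_gt open_halfspace_Re_lt)
  ultimately show ?thesis by simp
qed

definition HH :: "real \<Rightarrow> complex \<Rightarrow> complex" where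
  "HH q z = (GG q z - 1) / (\<i> * sin z)"

lemma F_HH: "sin z \<noteq> 0 \<Longrightarrow> F q l z = 0 \<longleftrightarrow> l = HH q z"
  unfolding F_GG HH_def by (auto simp: field_simps)

lemma exist_nonzero:
  fixes q \<phi>0 :: real
  assumes hq: "q > 0" and hc: "cos \<phi>0 > 0" and hs: "sin \<phi>0 \<noteq> 0"
    and hG: "GG q (of_real \<phi>0) = 1" and hQ: "of_real \<phi>0 \<in> stripQ"
  shows "\<exists>r>0. \<exists>\<phi> :: complex \<Rightarrow> complex.
     \<phi> holomorphic_on ball 0 r \<and> \<phi> 0 = of_real \<phi>0 \<and>
     (\<forall>l\<in>ball 0 r. \<phi> l \<in> stripQ \<and> F q l (\<phi> l) = 0) \<and>
     (\<forall>r'>0. \<forall>\<psi> :: complex \<Rightarrow> complex.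
        (\<psi> analytic_on ball 0 r' \<and> \<psi> 0 = of_real \<phi>0 \<and>
         (\<forall>l\<in>ball 0 r'. F q l (\<psi> l) = 0))
        \<longrightarrow> (\<forall>\<^sub>F l in nhds 0. \<psi> l = \<phi> l))"
proof -
  define U where "U = stripQ \<inter> {z. sin z \<noteq> 0}"
  have oU: "open U" unfolding U_def
    by (intro open_Int open_stripQ open_Collect_neq continuous_intros)
  have p0U: "of_real \<phi>0 \<in> U" using hQ hs by (simp add: U_def sin_of_real)
  have Hd: "(HH q has_field_derivative
      ((GG q z * (- 2 * \<i> - 2 * of_real q * \<i> * cos z)) * (\<i> * sin z) - (GG q z - 1) * (\<i> * cos z)) / (\<i> * sin z)^2) (at z)"
    if "sin z \<noteq> 0" for z
    unfolding HH_def
    by (rule derivative_eq_intros GG_deriv refl | use that in \<open>simp add: power2_eq_square\<close>)+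
  have holH: "HH q holomorphic_on U"
    using Hd unfolding U_def holomorphic_on_def field_differentiable_def
    by (meson IntD2 has_field_derivative_at_within mem_Collect_eq)
  have "deriv (HH q) (of_real \<phi>0) = ((- 2 * \<i> - 2 * of_real q * \<i> * cos (of_real \<phi>0)) * (\<i> * sin (of_real \<phi>0))) / (\<i> * sin (of_real \<phi>0))^2"
    using DERIV_imp_deriv[OF Hd[of "of_real \<phi>0"]] hs hG by (simp add: sin_of_real)
  also have "\<dots> \<noteq> 0"
  proof -
    have "1 + q * cos \<phi>0 > 0" using hq hc by (simp add: add_pos_pos)
    then have "(- 2 * \<i> - 2 * of_real q * \<i> * cos (of_real \<phi>0)) \<noteq> 0"
      by (auto simp: cos_of_real complex_eq_iff)
    then show ?thesis using hs by (simp add: sin_of_real)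
  qed
  finally have dnz: "deriv (HH q) (of_real \<phi>0) \<noteq> 0" .
  obtain r0 where r0: "r0 > 0" "ball (of_real \<phi>0) r0 \<subseteq> U" "open (HH q ` ball (of_real \<phi>0) r0)"
      "inj_on (HH q) (ball (of_real \<phi>0) r0)"
    using has_complex_derivative_locally_invertible[OF holH p0U oU dnz] by blast
  define B where "B = ball (complex_of_real \<phi>0) r0"
  have holB: "HH q holomorphic_on B" using holH r0(2) B_def holomorphic_on_subset by blast
  obtain g where g: "g holomorphic_on (HH q ` B)" "\<And>z. z \<in> B \<Longrightarrow> g (HH q z) = z"
    using holomorphic_has_inverse[OF holB _ r0(4)[folded B_def]] B_def by blast
  have H0: "HH q (of_real \<phi>0) = 0" using hG by (simp add: HH_def)
  have "0 \<in> HH q ` B" using H0 r0(1) B_def by (metis centre_in_ball image_eqI)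
  then obtain \<rho> where \<rho>: "\<rho> > 0" "ball 0 \<rho> \<subseteq> HH q ` B"
    using r0(3)[folded B_def] openE by blast
  have g0: "g 0 = of_real \<phi>0" using g(2)[of "of_real \<phi>0"] H0 r0(1) B_def by simp
  have sol: "g l \<in> stripQ \<and> F q l (g l) = 0 \<and> g l \<in> B" if lb: "l \<in> ball 0 \<rho>" for l
  proof -
    obtain z where z: "z \<in> B" "l = HH q z" using \<rho>(2) lb by blast
    then have "z \<in> U" using r0(2) B_def by blast
    then show ?thesis using z g(2) F_HH[of z q l] by (auto simp: U_def)
  qed
  show ?thesis
  proof (intro exI conjI allI impI)
    show "\<rho> > 0" by fact
    show "g holomorphic_on ball 0 \<rho>" using g(1) \<rho>(2) holomorphic_on_subset by blast
    show "g 0 = of_real \<phi>0" by fact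
    show "\<forall>l\<in>ball 0 \<rho>. g l \<in> stripQ \<and> F q l (g l) = 0" using sol by blast
  next
    fix r' :: real and \<psi> :: "complex \<Rightarrow> complex"
    assume r': "r' > 0" and
      h\<psi>: "\<psi> analytic_on ball 0 r' \<and> \<psi> 0 = of_real \<phi>0 \<and> (\<forall>l\<in>ball 0 r'. F q l (\<psi> l) = 0)"
    have "isCont \<psi> 0"
      using h\<psi> r' by (meson analytic_at_imp_isCont analytic_on_subset centre_in_ball empty_subsetI insert_subset)
    then have "(\<psi> \<longlongrightarrow> of_real \<phi>0) (at 0)" using h\<psi> by (simp add: isCont_def)
    then have "\<forall>\<^sub>F l in at 0. \<psi> l \<in> B"
      using r0(1) B_def by (intro topological_tendstoD) auto
    then have ev1: "\<forall>\<^sub>F l in nhds 0. l \<noteq> 0 \<longrightarrow> \<psi> l \<in> B" by (simp add: eventually_at_filter)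
    have ev2: "\<forall>\<^sub>F l in nhds 0. l \<in> ball 0 (min \<rho> r')"
      using \<rho>(1) r' by (intro eventually_nhds_in_open) auto
    show "\<forall>\<^sub>F l in nhds 0. \<psi> l = g l"
      using ev1 ev2
    proof eventually_elim
      case (elim l)
      show ?case
      proof (cases "l = 0")
        case True then show ?thesis using h\<psi> g0 by simp
      next
        case False
        then have "\<psi> l \<in> B" using elim by blast
        then have "\<psi> l \<in> U" using r0(2) B_def by blast
        then have sn: "sin (\<psi> l) \<noteq> 0" by (simp add: U_def)
        have "F q l (\<psi> l) = 0" using h\<psi> elim by auto
        then have "l = HH q (\<psi> l)" using F_HH[OF sn] by blast
        then show ?thesis using g(2)[OF \<open>\<psi> l \<in> B\<close>] by simp
      qed
    qed
  qed
qed

lemma unique_zero: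
  fixes q :: real
  assumes hq: "q > 0" and r': "r' > 0"
    and h\<psi>: "\<psi> analytic_on ball 0 r'" "\<psi> 0 = 0" "\<forall>l\<in>ball 0 r'. F q l (\<psi> l) = 0"
  shows "\<forall>\<^sub>F l in nhds 0. \<psi> l = 0"
proof -
  define G1 where "G1 = (\<lambda>z. GG q z - 1)"
  have hG1: "G1 holomorphic_on UNIV" unfolding G1_def GG_def by (intro holomorphic_intros)
  define K where "K = (\<lambda>z. if z = 0 then deriv G1 0 else (G1 z - G1 0) / (z - 0))"
  define S where "S = (\<lambda>z::complex. if z = 0 then deriv sin 0 else (sin z - sin 0) / (z - 0))"
  have hK: "K holomorphic_on UNIV" unfolding K_def by (rule pole_lemma_open[OF hG1 open_UNIV])
  have hS: "S holomorphic_on UNIV" unfolding S_def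
    by (rule pole_lemma_open[OF _ open_UNIV]) (intro holomorphic_intros)
  have G10: "G1 0 = 0" by (simp add: G1_def GG_def)
  have "(G1 has_field_derivative (GG q 0 * (- 2 * \<i> - 2 * of_real q * \<i> * cos 0))) (at 0)"
    unfolding G1_def by (rule derivative_eq_intros GG_deriv refl | simp)+
  then have K0: "K 0 = - 2 * \<i> - 2 * of_real q * \<i>"
    unfolding K_def by (simp add: DERIV_imp_deriv GG_def)
  have K0nz: "K 0 \<noteq> 0" using hq by (simp add: K0 complex_eq_iff)
  have fact: "F q l z = z * (\<i> * l * S z - K z)" for l z
    by (cases "z = 0") (auto simp: F_GG S_def K_def G1_def G10 GG_def field_simps)
  have "isCont \<psi> 0"
    using h\<psi> r' by (meson analytic_at_imp_isCont analytic_on_subset centre_in_ball empty_subsetI insert_subset)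
  moreover have "isCont S (\<psi> 0)" "isCont K (\<psi> 0)"
    using hS hK by (meson UNIV_I continuous_on_eq_continuous_at holomorphic_on_imp_continuous_on open_UNIV)+
  ultimately have "isCont (\<lambda>l. \<i> * l * S (\<psi> l) - K (\<psi> l)) 0"
    by (intro continuous_intros) (auto intro: continuous_at_compose[unfolded o_def])
  then have "((\<lambda>l. \<i> * l * S (\<psi> l) - K (\<psi> l)) \<longlongrightarrow> - K 0) (at 0)"
    using h\<psi>(2) by (simp add: isCont_def)
  then have "\<forall>\<^sub>F l in at 0. \<i> * l * S (\<psi> l) - K (\<psi> l) \<noteq> 0"
    using K0nz by (intro tendsto_imp_eventually_ne[of _ "- K 0"]) auto
  then have ev1: "\<forall>\<^sub>F l in nhds 0. l \<noteq> 0 \<longrightarrow> \<i> * l * S (\<psi> l) - K (\<psi> l) \<noteq> 0"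
    by (simp add: eventually_at_filter)
  have ev2: "\<forall>\<^sub>F l in nhds 0. l \<in> ball 0 r'"
    using r' by (intro eventually_nhds_in_open) auto
  show ?thesis using ev1 ev2
  proof eventually_elim
    case (elim l)
    show ?case
    proof (cases "l = 0")
      case True then show ?thesis using h\<psi>(2) by simp
    next
      case False
      have "F q l (\<psi> l) = 0" using h\<psi>(3) elim by auto
      then show ?thesis using elim False fact[of l "\<psi> l"] by simp
    qed
  qed
qed

definition WW :: "real \<Rightarrow> complex \<Rightarrow> complex" where
  "WW q z = - 2 * \<i> - 2 * of_real q * \<i> * cos z"

lemma GG_chain [derivative_intros]:
  "(f has_field_derivative f') (at x within s) \<Longrightarrow>
   ((\<lambda>x. GG q (f x)) has_field_derivative GG q (f x) * WW q (f x) * f') (at x within s)"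
  unfolding GG_def WW_def by (rule derivative_eq_intros refl | simp add: algebra_simps)+

lemma WW_chain [derivative_intros]:
  "(f has_field_derivative f') (at x within s) \<Longrightarrow>
   ((\<lambda>x. WW q (f x)) has_field_derivative 2 * of_real q * \<i> * sin (f x) * f') (at x within s)"
  unfolding WW_def by (rule derivative_eq_intros refl | simp add: algebra_simps)+

lemma deriv_zero_on:
  assumes "open S" "z \<in> S" "\<And>w. w \<in> S \<Longrightarrow> f w = (0::complex)" "(f has_field_derivative D) (at z)"
  shows "D = 0"
proof -
  have "((\<lambda>_. 0) has_field_derivative 0) (at z)" by simp
  then have "(f has_field_derivative 0) (at z)"
    by (rule has_field_derivative_transform_within_open[where S=S]) (use assms in auto)
  then show ?thesis using assms(4) DERIV_unique by blast
qed

lemma implicit_derivs: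
  fixes q \<phi>0 :: real
  assumes hol: "\<phi> holomorphic_on ball 0 \<rho>" and \<rho>: "\<rho> > 0"
    and sol: "\<forall>l\<in>ball 0 \<rho>. F q l (\<phi> l) = 0" and p0: "\<phi> 0 = of_real \<phi>0"
    and hG: "GG q (of_real \<phi>0) = 1"
  defines "a \<equiv> deriv \<phi> 0" and "b \<equiv> deriv (deriv \<phi>) 0"
  shows "\<i> * sin (of_real \<phi>0) - WW q (of_real \<phi>0) * a = 0"
    and "2 * \<i> * cos (of_real \<phi>0) * a - (WW q (of_real \<phi>0) ^ 2 * a ^ 2
           + 2 * of_real q * \<i> * sin (of_real \<phi>0) * a ^ 2 + WW q (of_real \<phi>0) * b) = 0"
proof -
  define d1 where "d1 = deriv \<phi>"
  define d2 where "d2 = deriv d1"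
  have hd1: "d1 holomorphic_on ball 0 \<rho>" unfolding d1_def using hol by (simp add: holomorphic_deriv)
  have D1: "(\<phi> has_field_derivative d1 l) (at l)" if "l \<in> ball 0 \<rho>" for l
    using hol that unfolding d1_def
    by (meson DERIV_deriv_iff_field_differentiable holomorphic_on_imp_differentiable_at open_ball)
  have D2: "(d1 has_field_derivative d2 l) (at l)" if "l \<in> ball 0 \<rho>" for l
    using hd1 that unfolding d2_def
    by (meson DERIV_deriv_iff_field_differentiable holomorphic_on_imp_differentiable_at open_ball)
  define E1 where "E1 = (\<lambda>l. \<i> * sin (\<phi> l) + \<i> * l * (cos (\<phi> l) * d1 l) - GG q (\<phi> l) * WW q (\<phi> l) * d1 l)"
  have dE: "((\<lambda>l. F q l (\<phi> l)) has_field_derivative E1 l) (at l)" if "l \<in> ball 0 \<rho>" for l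
    unfolding F_GG E1_def
    by (rule derivative_eq_intros D1[OF that] refl | simp add: algebra_simps)+
  have E1z: "E1 l = 0" if "l \<in> ball 0 \<rho>" for l
    by (rule deriv_zero_on[OF open_ball that _ dE[OF that]]) (use sol in auto)
  define E2 where "E2 = (\<lambda>l. \<i> * cos (\<phi> l) * d1 l + \<i> * cos (\<phi> l) * d1 l
     + \<i> * l * (- sin (\<phi> l) * d1 l * d1 l + cos (\<phi> l) * d2 l)
     - (GG q (\<phi> l) * WW q (\<phi> l) * d1 l * WW q (\<phi> l) * d1 l
        + GG q (\<phi> l) * (2 * of_real q * \<i> * sin (\<phi> l) * d1 l) * d1 l
        + GG q (\<phi> l) * WW q (\<phi> l) * d2 l))"
  have dE1: "(E1 has_field_derivative E2 l) (at l)" if "l \<in> ball 0 \<rho>" for l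
    unfolding E1_def E2_def
    by (rule derivative_eq_intros D1[OF that] D2[OF that] refl | simp add: algebra_simps)+
  have E2z: "E2 0 = 0"
    using \<rho> E1z dE1[of 0] by (intro deriv_zero_on[of "ball 0 \<rho>" 0 E1 "E2 0"]) auto
  have E1z0: "E1 0 = 0" using E1z \<rho> by simp
  show "\<i> * sin (of_real \<phi>0) - WW q (of_real \<phi>0) * a = 0"
    using E1z0 unfolding E1_def a_def d1_def by (simp add: p0 hG)
  show "2 * \<i> * cos (of_real \<phi>0) * a - (WW q (of_real \<phi>0) ^ 2 * a ^ 2
           + 2 * of_real q * \<i> * sin (of_real \<phi>0) * a ^ 2 + WW q (of_real \<phi>0) * b) = 0"
    using E2z unfolding E2_def a_def b_def d1_def d2_def by (simp add: p0 hG power2_eq_square algebra_simps)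
qed

lemma coeffs:
  fixes q s c :: real and a b :: complex
  assumes hc: "c > 0" and hq: "q > 0"
    and eq1: "\<i> * of_real s - (- 2 * \<i> - 2 * of_real q * \<i> * of_real c) * a = 0"
    and eq2: "2 * \<i> * of_real c * a - ((- 2 * \<i> - 2 * of_real q * \<i> * of_real c) ^ 2 * a ^ 2
           + 2 * of_real q * \<i> * of_real s * a ^ 2 + (- 2 * \<i> - 2 * of_real q * \<i> * of_real c) * b) = 0"
  defines "qn \<equiv> 2 * q + 2 / c"
  shows "a = - of_real ((s / c) / qn)"
    and "b / 2 = of_real (s / c) * (of_real (1 / qn^2 + q / qn^3 * (s / c)^2) + \<i> / 2 * of_real (s / qn))"
proof -
  define k where "k = 1 + q * c"
  have k: "k > 0" using hc hq by (simp add: k_def add_pos_pos)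
  have W: "(- 2 * \<i> - 2 * of_real q * \<i> * of_real c) = - 2 * \<i> * of_real k"
    by (simp add: k_def algebra_simps)
  have qnk: "qn = 2 * k / c" using hc by (simp add: qn_def k_def field_simps)
  have e1: "\<i> * of_real s + 2 * \<i> * of_real k * a = 0" using eq1 unfolding W by (simp add: algebra_simps)
  define A where "A = - s / (2 * k)"
  have aA: "a = of_real A"
  proof -
    have "2 * \<i> * of_real k * (a - of_real A) = \<i> * of_real s + 2 * \<i> * of_real k * a"
      using k by (simp add: A_def algebra_simps)
    then have "2 * \<i> * of_real k * (a - of_real A) = 0" using e1 by simp
    then show ?thesis using k by simp
  qed
  show "a = - of_real ((s / c) / qn)" unfolding aA qnk A_def using hc k
    by (simp add: field_simps)
  define P where "P = 4 * k^2 * A^2"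
  define R where "R = 2 * c * A - 2 * q * s * A^2"
  have e2: "2 * \<i> * of_real c * a + 4 * of_real k ^ 2 * a ^ 2 - 2 * of_real q * \<i> * of_real s * a ^ 2 + 2 * \<i> * of_real k * b = 0"
    using eq2 unfolding W by (simp add: algebra_simps power2_eq_square)
  have "2 * \<i> * of_real c * a + 4 * of_real k ^ 2 * a ^ 2 - 2 * of_real q * \<i> * of_real s * a ^ 2
       = of_real P + \<i> * of_real R"
    unfolding aA P_def R_def by (simp add: algebra_simps power2_eq_square)
  then have e3: "of_real P + \<i> * of_real R + 2 * \<i> * of_real k * b = 0" using e2 by simp
  have bB: "b = of_real (- R / (2 * k)) + \<i> * of_real (P / (2 * k))"
  proof -
    have "2 * \<i> * of_real k * (b - (of_real (- R / (2 * k)) + \<i> * of_real (P / (2 * k)))) =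
          of_real P + \<i> * of_real R + 2 * \<i> * of_real k * b"
      using k by (simp add: algebra_simps of_real_divide)
    then show ?thesis using e3 k by simp
  qed
  have r1: "- R / (4 * k) = (s / c) * (1 / qn^2 + q / qn^3 * (s / c)^2)"
    unfolding R_def A_def qnk using hc k by (simp add: field_simps power2_eq_square power3_eq_cube)
  have r2: "P / (4 * k) = (s / c) * (s / qn) / 2"
    unfolding P_def A_def qnk using hc k by (simp add: field_simps power2_eq_square)
  have "b / 2 = of_real (- R / (4 * k)) + \<i> * of_real (P / (4 * k))"
    unfolding bB by (simp add: field_simps)
  also have "\<dots> = of_real (s / c) * (of_real (1 / qn^2 + q / qn^3 * (s / c)^2) + \<i> / 2 * of_real (s / qn))"
    unfolding r1 r2 by (simp add: algebra_simps)
  finally show "b / 2 = of_real (s / c) * (of_real (1 / qn^2 + q / qn^3 * (s / c)^2) + \<i> / 2 * of_real (s / qn))" .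
qed

lemma deriv2_eval:
  fixes f :: "complex \<Rightarrow> complex"
  assumes r: "r > 0"
    and d1: "\<And>l. l \<in> ball 0 r \<Longrightarrow> (f has_field_derivative F1 l) (at l)"
    and d2: "\<And>l. l \<in> ball 0 r \<Longrightarrow> (F1 has_field_derivative F2 l) (at l)"
  shows "deriv f 0 = F1 0" "deriv (deriv f) 0 = F2 0"
proof -
  show "deriv f 0 = F1 0" using d1[of 0] r by (simp add: DERIV_imp_deriv)
  have "(deriv f has_field_derivative F2 0) (at 0)"
    by (rule has_field_derivative_transform_within_open[OF d2[of 0], where S="ball 0 r"])
       (use r in \<open>auto simp: DERIV_imp_deriv[OF d1]\<close>)
  then show "deriv (deriv f) 0 = F2 0" by (rule DERIV_imp_deriv)
qed

lemma bigo_real_restrict: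
  fixes f :: "complex \<Rightarrow> complex"
  assumes "f \<in> O[at 0](\<lambda>l. l^3)"
  shows "(\<lambda>x::real. Re (f (of_real x))) \<in> O[at 0](\<lambda>x. x^3)"
proof -
  obtain c where c: "c > 0" "\<forall>\<^sub>F l in at 0. norm (f l) \<le> c * norm (l^3)"
    using assms by (elim landau_o.bigE)
  then obtain d where d: "d > 0" "\<And>l. l \<noteq> 0 \<and> dist l 0 < d \<Longrightarrow> norm (f l) \<le> c * norm (l^3)"
    unfolding eventually_at by auto
  have "\<forall>\<^sub>F x in at (0::real). norm (Re (f (of_real x))) \<le> c * norm (x^3)"
    unfolding eventually_at
  proof (intro exI[of _ d] conjI ballI impI)
    fix x :: real assume "x \<noteq> 0 \<and> dist x 0 < d"
    then have "norm (f (of_real x)) \<le> c * norm ((of_real x :: complex)^3)" using d(2)[of "of_real x"] by simp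
    moreover have "norm (Re (f (of_real x))) \<le> norm (f (of_real x))" by (simp add: abs_Re_le_cmod)
    ultimately show "norm (Re (f (of_real x))) \<le> c * norm (x^3)" by (simp add: norm_power power_abs)
  qed (use d in auto)
  then show ?thesis by (rule landau_o.bigI[OF c(1)])
qed

lemma coeffs2:
  fixes q s c \<mu> :: real and a b :: complex
  assumes hc: "c > 0" and hq: "q > 0"
  defines "qn \<equiv> 2 * q + 2 / c"
  assumes ha: "a = - of_real ((s / c) / qn)"
    and hb: "b / 2 = of_real (s / c) * (of_real (1 / qn^2 + q / qn^3 * (s / c)^2) + \<i> / 2 * of_real (s / qn))"
  shows "\<i> * of_real \<mu> * (of_real c * a) = - (\<i> * of_real (\<mu> * s) / of_real qn)"
    and "\<i> * of_real \<mu> * (- of_real s * a * a + of_real c * b) / 2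
         = \<i> * of_real (\<mu> * s) * (of_real ((1 - s^2 / ((2 * q + 2 / c) * c^3)) / qn^2) + \<i> / 2 * of_real (s / qn))"
proof -
  have qn: "qn > 0" using hc hq by (simp add: qn_def add_pos_pos)
  show "\<i> * of_real \<mu> * (of_real c * a) = - (\<i> * of_real (\<mu> * s) / of_real qn)"
    unfolding ha using hc qn by (simp add: field_simps)
  have b: "b = 2 * of_real ((s / c) * (1 / qn^2 + q / qn^3 * (s / c)^2)) + \<i> * of_real ((s/c) * (s / qn))"
  proof -
    have "b = 2 * (b / 2)" by simp
    also have "\<dots> = 2 * of_real ((s / c) * (1 / qn^2 + q / qn^3 * (s / c)^2)) + \<i> * of_real ((s/c) * (s / qn))"
      unfolding hb by (simp add: algebra_simps)
    finally show ?thesis .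
  qed
  have re: "- s * (s / c / qn)^2 / 2 + c * ((s / c) * (1 / qn^2 + q / qn^3 * (s / c)^2))
      = s * ((1 - s^2 / ((2 * q + 2 / c) * c^3)) / qn^2)"
  proof -
    define k where "k = 1 + q * c"
    have k: "k > 0" using hc hq by (simp add: k_def add_pos_pos)
    have qk: "2 * q + 2 / c = 2 * k / c" using hc by (simp add: k_def field_simps)
    have e: "- s * (s / c / (2 * k / c))^2 / 2 + c * ((s / c) * (1 / (2 * k / c)^2 + q / (2 * k / c)^3 * (s / c)^2))
      = s * ((1 - s^2 / ((2 * k / c) * c^3)) / (2 * k / c)^2)"
    proof -
      show ?thesis using hc k by (simp add: field_simps power2_eq_square power3_eq_cube) (simp add: k_def algebra_simps)
    qed
    show ?thesis unfolding qn_def qk by (rule e)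
  qed
  have "- of_real s * a * a + of_real c * b
      = 2 * of_real (- s * (s / c / qn)^2 / 2 + c * ((s / c) * (1 / qn^2 + q / qn^3 * (s / c)^2)))
        + \<i> * of_real (c * ((s/c) * (s / qn)))"
    unfolding ha b by (simp add: algebra_simps power2_eq_square)
  also have "\<dots> = 2 * of_real (s * ((1 - s^2 / ((2 * q + 2 / c) * c^3)) / qn^2)) + \<i> * of_real (s * (s / qn))"
    unfolding re using hc by simp
  finally have fin: "- of_real s * a * a + of_real c * b = 2 * of_real (s * ((1 - s^2 / ((2 * q + 2 / c) * c^3)) / qn^2)) + \<i> * of_real (s * (s / qn))" .
  define Z where "Z = (1 - s^2 / ((2 * q + 2 / c) * c^3)) / qn^2"
  define Y where "Y = s / qn"
  show "\<i> * of_real \<mu> * (- of_real s * a * a + of_real c * b) / 2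
         = \<i> * of_real (\<mu> * s) * (of_real ((1 - s^2 / ((2 * q + 2 / c) * c^3)) / qn^2) + \<i> / 2 * of_real (s / qn))"
    unfolding fin Z_def[symmetric] Y_def[symmetric] by (simp add: algebra_simps) (simp add: field_simps)
qed

theorem mainTheorem4:
  fixes q \<mu> \<phi>0 :: real and n :: int
  assumes hq: "q > 0" and hmu: "\<mu> > 0"
    and hlow: "- (pi/2) < \<phi>0" and hup: "\<phi>0 < pi/2"
    and hsol: "q * sin \<phi>0 = of_int n * pi - \<phi>0"
  defines "qn \<equiv> 2 * q + 2 / cos \<phi>0"
    and "\<omega>0 \<equiv> \<mu> * sin \<phi>0"
    and "\<sigma> \<equiv> 1 - (sin \<phi>0)^2 / ((2 * q + 2 / cos \<phi>0) * (cos \<phi>0)^3)"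
  shows "\<exists>r>0. \<exists>\<phi> :: complex \<Rightarrow> complex.
     \<phi> analytic_on ball 0 r \<and> \<phi> 0 = of_real \<phi>0 \<and>
     (\<forall>l\<in>ball 0 r. \<phi> l \<in> stripQ \<and> F q l (\<phi> l) = 0) \<and>
     (\<forall>r'>0. \<forall>\<psi> :: complex \<Rightarrow> complex.
        (\<psi> analytic_on ball 0 r' \<and> \<psi> 0 = of_real \<phi>0 \<and>
         (\<forall>l\<in>ball 0 r'. F q l (\<psi> l) = 0))
        \<longrightarrow> (\<forall>\<^sub>F l in nhds 0. \<psi> l = \<phi> l)) \<and>
     (\<lambda>l. \<phi> l - (of_real \<phi>0 - of_real (tan \<phi>0 / qn) * l
         + of_real (tan \<phi>0) * (of_real (1 / qn^2 + q / qn^3 * (tan \<phi>0)^2)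
             + \<i> / 2 * of_real (sin \<phi>0 / qn)) * l^2))
       \<in> O[at 0](\<lambda>l. l^3) \<and>
     (\<lambda>l. \<i> * of_real \<mu> * sin (\<phi> l)
         - \<i> * of_real \<omega>0 * (1 - l / of_real qn + of_real (\<sigma> / qn^2) * l^2
             + \<i> / 2 * of_real (sin \<phi>0 / qn) * l^2))
       \<in> O[at 0](\<lambda>l. l^3) \<and>
     (\<lambda>x::real. Re (\<i> * of_real \<mu> * sin (\<phi> (of_real x)))
         - (- (\<mu> * (sin \<phi>0)^2 / (2 * qn)) * x^2))
       \<in> O[at 0](\<lambda>x. x^3)"
proof -
  have hc: "cos \<phi>0 > 0" using hlow hup by (intro cos_gt_zero_pi) auto
  have hQ: "complex_of_real \<phi>0 \<in> stripQ" using hlow hup by (simp add: stripQ_def)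
  have qnpos: "qn > 0" using hq hc by (simp add: qn_def add_pos_pos)
  show ?thesis
  proof (cases "sin \<phi>0 = 0")
    case True
    then have z: "\<phi>0 = 0" using hlow hup sin_zero_pi_iff[of \<phi>0] by auto
    have Q0: "(0::complex) \<in> stripQ" by (simp add: stripQ_def)
    show ?thesis
    proof (intro exI[of _ "1::real"] exI[of _ "\<lambda>_::complex. 0::complex"] conjI allI impI ballI)
      show "(\<lambda>_::complex. 0::complex) analytic_on ball 0 1" by (simp add: analytic_on_const)
      show "(0::complex) = of_real \<phi>0" using z by simp
    next
      fix l :: complex assume "l \<in> ball 0 1"
      show "(0::complex) \<in> stripQ" by (rule Q0)
      show "F q l 0 = 0" by (simp add: F_def)
    next
      fix r' :: real and \<psi> :: "complex \<Rightarrow> complex"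
      assume "0 < r'" and h: "\<psi> analytic_on ball 0 r' \<and> \<psi> 0 = of_real \<phi>0 \<and> (\<forall>l\<in>ball 0 r'. F q l (\<psi> l) = 0)"
      then show "\<forall>\<^sub>F l in nhds 0. \<psi> l = 0" using unique_zero[OF hq, of r' \<psi>] z by auto
    qed (simp_all add: z \<omega>0_def)
  next
    case False
    note hG = GG_phi0[OF hsol]
    obtain r \<phi> where r: "r > 0" and hol: "\<phi> holomorphic_on ball 0 r" and p0: "\<phi> 0 = of_real \<phi>0"
      and sol: "\<forall>l\<in>ball 0 r. \<phi> l \<in> stripQ \<and> F q l (\<phi> l) = 0"
      and uniq: "\<forall>r'>0. \<forall>\<psi> :: complex \<Rightarrow> complex.
        (\<psi> analytic_on ball 0 r' \<and> \<psi> 0 = of_real \<phi>0 \<and>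
         (\<forall>l\<in>ball 0 r'. F q l (\<psi> l) = 0))
        \<longrightarrow> (\<forall>\<^sub>F l in nhds 0. \<psi> l = \<phi> l)"
      using exist_nonzero[OF hq hc False hG hQ] by blast
    define a where "a = deriv \<phi> 0"
    define b where "b = deriv (deriv \<phi>) 0"
    have sol': "\<forall>l\<in>ball 0 r. F q l (\<phi> l) = 0" using sol by blast
    note ID = implicit_derivs[OF hol r sol' p0 hG, folded a_def b_def]
    have eq1: "\<i> * of_real (sin \<phi>0) - (- 2 * \<i> - 2 * of_real q * \<i> * of_real (cos \<phi>0)) * a = 0"
      using ID(1) by (simp add: WW_def sin_of_real cos_of_real)
    have eq2: "2 * \<i> * of_real (cos \<phi>0) * a - ((- 2 * \<i> - 2 * of_real q * \<i> * of_real (cos \<phi>0)) ^ 2 * a ^ 2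
           + 2 * of_real q * \<i> * of_real (sin \<phi>0) * a ^ 2 + (- 2 * \<i> - 2 * of_real q * \<i> * of_real (cos \<phi>0)) * b) = 0"
      using ID(2) by (simp add: WW_def sin_of_real cos_of_real)
    note C = coeffs[OF hc hq eq1 eq2, folded qn_def]
    have tn: "tan \<phi>0 = sin \<phi>0 / cos \<phi>0" by (simp add: tan_def)
    note C2 = coeffs2[OF hc hq C[unfolded qn_def], folded qn_def \<sigma>_def \<omega>0_def, of \<mu>]
    have T1: "(\<lambda>l. \<phi> l - (\<phi> 0 + a * l + b / 2 * l^2)) \<in> O[at 0](\<lambda>l. l^3)"
      using taylor2_bigo[OF hol r] unfolding a_def b_def .
    have P1: "of_real \<phi>0 - of_real (tan \<phi>0 / qn) * l
         + of_real (tan \<phi>0) * (of_real (1 / qn^2 + q / qn^3 * (tan \<phi>0)^2)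
             + \<i> / 2 * of_real (sin \<phi>0 / qn)) * l^2 = \<phi> 0 + a * l + b / 2 * l^2" for l
      unfolding p0 C(1) C(2) tn by (simp add: algebra_simps)
    define d1 where "d1 = deriv \<phi>"
    define d2 where "d2 = deriv d1"
    have hd1: "d1 holomorphic_on ball 0 r" unfolding d1_def using hol by (simp add: holomorphic_deriv)
    have D1: "(\<phi> has_field_derivative d1 l) (at l)" if "l \<in> ball 0 r" for l
      using hol that unfolding d1_def
      by (meson DERIV_deriv_iff_field_differentiable holomorphic_on_imp_differentiable_at open_ball)
    have D2: "(d1 has_field_derivative d2 l) (at l)" if "l \<in> ball 0 r" for l
      using hd1 that unfolding d2_def
      by (meson DERIV_deriv_iff_field_differentiable holomorphic_on_imp_differentiable_at open_ball)
    define h where "h = (\<lambda>l. \<i> * of_real \<mu> * sin (\<phi> l))"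
    have holh: "h holomorphic_on ball 0 r" unfolding h_def using hol by (intro holomorphic_intros)
    have Dh1: "(h has_field_derivative \<i> * of_real \<mu> * (cos (\<phi> l) * d1 l)) (at l)" if "l \<in> ball 0 r" for l
      unfolding h_def by (rule derivative_eq_intros D1[OF that] refl | simp)+
    have Dh2: "((\<lambda>l. \<i> * of_real \<mu> * (cos (\<phi> l) * d1 l)) has_field_derivative
        \<i> * of_real \<mu> * (- sin (\<phi> l) * d1 l * d1 l + cos (\<phi> l) * d2 l)) (at l)" if "l \<in> ball 0 r" for l
      by (rule derivative_eq_intros D1[OF that] D2[OF that] refl | simp add: algebra_simps)+
    note DE = deriv2_eval[OF r Dh1 Dh2]
    have h0: "h 0 = \<i> * of_real \<mu> * of_real (sin \<phi>0)" by (simp add: h_def p0 sin_of_real)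
    have h1: "deriv h 0 = - (\<i> * of_real \<omega>0 / of_real qn)"
      using DE(1) C2(1) by (simp add: \<omega>0_def p0 cos_of_real d1_def a_def[symmetric])
    have h2: "deriv (deriv h) 0 / 2 = \<i> * of_real \<omega>0 * (of_real (\<sigma> / qn^2) + \<i> / 2 * of_real (sin \<phi>0 / qn))"
      using DE(2) C2(2) by (simp add: \<omega>0_def p0 cos_of_real sin_of_real d1_def d2_def a_def[symmetric] b_def[symmetric])
    have T2: "(\<lambda>l. h l - (h 0 + deriv h 0 * l + deriv (deriv h) 0 / 2 * l^2)) \<in> O[at 0](\<lambda>l. l^3)"
      by (rule taylor2_bigo[OF holh r])
    have P2: "\<i> * of_real \<omega>0 * (1 - l / of_real qn + of_real (\<sigma> / qn^2) * l^2
             + \<i> / 2 * of_real (sin \<phi>0 / qn) * l^2) = h 0 + deriv h 0 * l + deriv (deriv h) 0 / 2 * l^2" for l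
      unfolding h0 h1 h2 \<omega>0_def by (simp add: algebra_simps)
    have T2': "(\<lambda>l. \<i> * of_real \<mu> * sin (\<phi> l)
         - \<i> * of_real \<omega>0 * (1 - l / of_real qn + of_real (\<sigma> / qn^2) * l^2
             + \<i> / 2 * of_real (sin \<phi>0 / qn) * l^2)) \<in> O[at 0](\<lambda>l. l^3)"
      unfolding P2 using T2 unfolding h_def .
    have T3: "(\<lambda>x::real. Re (\<i> * of_real \<mu> * sin (\<phi> (of_real x)))
         - (- (\<mu> * (sin \<phi>0)^2 / (2 * qn)) * x^2)) \<in> O[at 0](\<lambda>x. x^3)"
    proof -
      have "(\<lambda>x::real. Re (\<i> * of_real \<mu> * sin (\<phi> (of_real x))
         - \<i> * of_real \<omega>0 * (1 - of_real x / of_real qn + of_real (\<sigma> / qn^2) * (of_real x)^2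
             + \<i> / 2 * of_real (sin \<phi>0 / qn) * (of_real x)^2))) \<in> O[at 0](\<lambda>x. x^3)"
        by (rule bigo_real_restrict[OF T2'])
      moreover have EQ: "Re (\<i> * of_real \<mu> * sin (\<phi> (of_real x))
         - \<i> * of_real \<omega>0 * (1 - of_real x / of_real qn + of_real (\<sigma> / qn^2) * (of_real x)^2
             + \<i> / 2 * of_real (sin \<phi>0 / qn) * (of_real x)^2))
         = Re (\<i> * of_real \<mu> * sin (\<phi> (of_real x))) - (- (\<mu> * (sin \<phi>0)^2 / (2 * qn)) * x^2)" for x :: real
        by (simp add: \<omega>0_def power2_eq_square)
      ultimately show ?thesis by (simp only: EQ)
    qed
    show ?thesis
    proof (intro exI[of _ r] exI[of _ \<phi>] conjI)
      show "r > 0" by fact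
      show "\<phi> analytic_on ball 0 r" using hol by (simp add: analytic_on_open)
      show "\<phi> 0 = of_real \<phi>0" by fact
      show "\<forall>l\<in>ball 0 r. \<phi> l \<in> stripQ \<and> F q l (\<phi> l) = 0" by fact
      show "\<forall>r'>0. \<forall>\<psi> :: complex \<Rightarrow> complex.
        (\<psi> analytic_on ball 0 r' \<and> \<psi> 0 = of_real \<phi>0 \<and>
         (\<forall>l\<in>ball 0 r'. F q l (\<psi> l) = 0))
        \<longrightarrow> (\<forall>\<^sub>F l in nhds 0. \<psi> l = \<phi> l)" by fact
      show "(\<lambda>l. \<phi> l - (of_real \<phi>0 - of_real (tan \<phi>0 / qn) * l
         + of_real (tan \<phi>0) * (of_real (1 / qn^2 + q / qn^3 * (tan \<phi>0)^2)
             + \<i> / 2 * of_real (sin \<phi>0 / qn)) * l^2))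
       \<in> O[at 0](\<lambda>l. l^3)" unfolding P1 by (rule T1)
      show "(\<lambda>l. \<i> * of_real \<mu> * sin (\<phi> l)
         - \<i> * of_real \<omega>0 * (1 - l / of_real qn + of_real (\<sigma> / qn^2) * l^2
             + \<i> / 2 * of_real (sin \<phi>0 / qn) * l^2))
       \<in> O[at 0](\<lambda>l. l^3)" by (rule T2')
      show "(\<lambda>x::real. Re (\<i> * of_real \<mu> * sin (\<phi> (of_real x)))
         - (- (\<mu> * (sin \<phi>0)^2 / (2 * qn)) * x^2))
       \<in> O[at 0](\<lambda>x. x^3)" by (rule T3)
    qed
  qed
qed

end
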